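(* Let $S$ be an inverse semigroup that is a separately Scott-continuous mirror semigroup, with semilattice of idempotents $\Sigma$. Then the way-below relation $\ll$ on $S$ is multiplicative if and only if the way-below relation $\prec\!\!\!\prec$ on $\Sigma$ is multiplicative.
   Context: An inverse semigroup is a semigroup $S$ in which every $s$ has a unique $s^*$ with $ss^*s=s$ and $s^*ss^*=s^*$. $\Sigma=\Sigma(S)$ is the set of idempotents (a subsemigroup). The intrinsic order is $s\leqslant t$ iff $s=t\epsilon$ for some idempotent $\epsilon$. A subset is directed if nonempty and any two elements have an upper bound in it. $S$ is a mirror semigroup if every directed subset of $\Sigma$ having a supremum in $(\Sigma,\leqslant)$ also has a supremum in $(S,\leqslant)$. $S$ is separately Scott-continuous if for every directed $D\subseteq S$ with a supremum $\bigvee D$ in $S$ and every $s\in S$, $\bigvee(Ds)$ exists in $S$ and equals $(\bigvee D)s$. In a poset, $x$ is way-below $y$ if for every directed subset $D$ that has a supremum with $y\leqslant \sup D$, there is $d\in D$ with $x\leqslant d$. $\ll$ denotes the way-below relation of $(S,\leqslant)$ and $\prec\!\!\!\prec$ that of $(\Sigma,\leqslant)$. A way-below relation $R$ on a semigroup is multiplicative if $s\,R\,t$ and $s'\,R\,t'$ imply $ss'\,R\,tt'$. *)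

theory Defs
  imports Main
begin

definition inverse_semigroup :: "'a::semigroup_mult itself \<Rightarrow> bool" where
  "inverse_semigroup _ \<longleftrightarrow>
     (\<forall>s::'a. \<exists>!t. s * t * s = s \<and> t * s * t = t)"

definition idems :: "'a::semigroup_mult set" where
  "idems = {e. e * e = e}"

definition nat_le :: "'a::semigroup_mult \<Rightarrow> 'a \<Rightarrow> bool" where
  "nat_le s t \<longleftrightarrow> (\<exists>e \<in> idems. s = t * e)"

definition directed_wrt :: "('a \<Rightarrow> 'a \<Rightarrow> bool) \<Rightarrow> 'a set \<Rightarrow> bool" where
  "directed_wrt le D \<longleftrightarrow> D \<noteq> {} \<and> (\<forall>x\<in>D. \<forall>y\<in>D. \<exists>z\<in>D. le x z \<and> le y z)"

definition is_sup_in :: "'a set \<Rightarrow> ('a \<Rightarrow> 'a \<Rightarrow> bool) \<Rightarrow> 'a set \<Rightarrow> 'a \<Rightarrow> bool" where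
  "is_sup_in P le D x \<longleftrightarrow> x \<in> P \<and> (\<forall>d\<in>D. le d x) \<and>
     (\<forall>u\<in>P. (\<forall>d\<in>D. le d u) \<longrightarrow> le x u)"

definition way_below_in :: "'a set \<Rightarrow> ('a \<Rightarrow> 'a \<Rightarrow> bool) \<Rightarrow> 'a \<Rightarrow> 'a \<Rightarrow> bool" where
  "way_below_in P le x y \<longleftrightarrow>
     (\<forall>D. D \<subseteq> P \<longrightarrow> directed_wrt le D \<longrightarrow>
        (\<forall>z. is_sup_in P le D z \<longrightarrow> le y z \<longrightarrow> (\<exists>d\<in>D. le x d)))"

definition mirror_semigroup :: "'a::semigroup_mult itself \<Rightarrow> bool" where
  "mirror_semigroup _ \<longleftrightarrow>
     (\<forall>D::'a set. D \<subseteq> idems \<longrightarrow> directed_wrt nat_le D \<longrightarrow>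
        (\<exists>x. is_sup_in idems nat_le D x) \<longrightarrow> (\<exists>y. is_sup_in UNIV nat_le D y))"

definition sep_scott_continuous :: "'a::semigroup_mult itself \<Rightarrow> bool" where
  "sep_scott_continuous _ \<longleftrightarrow>
     (\<forall>D::'a set. \<forall>x. directed_wrt nat_le D \<longrightarrow> is_sup_in UNIV nat_le D x \<longrightarrow>
        (\<forall>s. is_sup_in UNIV nat_le ((\<lambda>d. d * s) ` D) (x * s)))"

definition multiplicative_on :: "'a::semigroup_mult set \<Rightarrow> ('a \<Rightarrow> 'a \<Rightarrow> bool) \<Rightarrow> bool" where
  "multiplicative_on P R \<longleftrightarrow>
     (\<forall>s\<in>P. \<forall>t\<in>P. \<forall>s'\<in>P. \<forall>t'\<in>P. R s t \<longrightarrow> R s' t' \<longrightarrow> R (s * s') (t * t'))"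

end

theory Submission imports Defs begin

locale IS =
  fixes T :: "'a::semigroup_mult itself"
  assumes ax: "inverse_semigroup T"
begin

definition inv :: "'a \<Rightarrow> 'a" where
  "inv s = (THE t. s * t * s = s \<and> t * s * t = t)"

lemma ex1: "\<exists>!t::'a. s * t * s = s \<and> t * s * t = t"
  using ax unfolding inverse_semigroup_def by blast

lemma inv12: "s * inv s * s = s \<and> inv s * s * inv s = inv s"
  unfolding inv_def by (rule theI') (rule ex1)

lemma inv1: "s * (inv s * s) = s" using inv12 by (simp add: mult.assoc)
lemma inv2: "inv s * (s * inv s) = inv s" using inv12 by (simp add: mult.assoc)

lemma inv_unique: "s * t * s = s \<Longrightarrow> t * s * t = t \<Longrightarrow> inv s = t"
  unfolding inv_def by (rule the1_equality) (rule ex1, simp)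

lemma inv_inv: "inv (inv s) = s"
  by (rule inv_unique) (simp_all add: mult.assoc inv1 inv2)

lemma inv_idem: "e * e = e \<Longrightarrow> inv e = e"
  by (rule inv_unique) simp_all

lemma idem_prod:
  fixes e f :: 'a
  assumes e: "e * e = e" and f: "f * f = f"
  shows "(e*f) * (e*f) = e*f"
proof -
  define x where "x = inv (e * f)"
  have h1: "e * f * x * (e * f) = e * f" and h2: "x * (e * f) * x = x"
    using inv12[of "e*f"] unfolding x_def by auto
  have ee: "\<And>y. e * (e * y) = e * y" using e by (metis mult.assoc)
  have ff: "\<And>y. f * (f * y) = f * y" using f by (metis mult.assoc)
  have h2': "\<And>y. x*(e*(f*(x*y))) = x*y" using h2 by (metis mult.assoc)
  have "inv (e*f) = f * x * e"
    apply (rule inv_unique)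
    using h1 h2' by (simp_all add: mult.assoc ee ff)
  hence xe: "x = f * x * e" unfolding x_def by simp
  have xx: "x * x = x"
    by (metis h2 mult.assoc xe)
  hence i1: "inv x = x" by (rule inv_idem)
  have i2: "inv x = e * f"
    apply (rule inv_unique) using h1 h2 by (simp_all add: mult.assoc)
  show "(e*f) * (e*f) = e*f" using xx i1 i2 by metis
qed

lemma idem_comm:
  fixes e f :: 'a
  assumes e: "e * e = e" and f: "f * f = f"
  shows "e * f = f * e"
proof -
  have ee: "\<And>y. e * (e * y) = e * y" using e by (metis mult.assoc)
  have ff: "\<And>y. f * (f * y) = f * y" using f by (metis mult.assoc)
  have efi: "(e*f) * (e*f) = e*f" using e f by (rule idem_prod)
  have fei: "(f*e) * (f*e) = f*e" using f e by (rule idem_prod)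
  have "inv (e*f) = f*e"
    apply (rule inv_unique) using efi fei by (simp_all add: mult.assoc ee ff)
  moreover have "inv (e*f) = e*f" using efi by (rule inv_idem)
  ultimately show ?thesis by simp
qed

lemma idem_ls: "(inv s * s) * (inv s * s) = inv s * s"
  by (metis inv1 mult.assoc)
lemma idem_rs: "(s * inv s) * (s * inv s) = s * inv s"
  by (metis inv2 mult.assoc)

lemma idems_iff:
  fixes s t u a d e f :: 'a
  shows "e \<in> idems \<longleftrightarrow> e * e = e" by (simp add: idems_def)

lemma comm_ax:
  fixes s t u a d e f :: 'a
  shows "e * e = e \<Longrightarrow> f * f = f \<Longrightarrow> e * (f * y) = f * (e * (y::'a))"
  by (metis idem_comm mult.assoc)

lemma idem_ax:
  fixes s t u a d e f :: 'a
  shows "e * e = e \<Longrightarrow> e * (e * y) = e * (y::'a)"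
  by (metis mult.assoc)

lemma inv1': "s * (inv s * (s * y)) = s * y" by (metis inv1 mult.assoc)
lemma inv2': "inv s * (s * (inv s * y)) = inv s * y" by (metis inv2 mult.assoc)

lemma inv_mult: "inv (s * t) = inv t * inv s"
proof (rule inv_unique)
  have c: "t * (inv t * (inv s * (s * y))) = inv s * (s * (t * (inv t * y)))" for y
    using comm_ax[OF idem_rs[of t] idem_ls[of s]] by (simp add: mult.assoc)
  show "s * t * (inv t * inv s) * (s * t) = s * t"
    by (simp add: mult.assoc c inv1' inv1)
  have c2: "inv s * (s * (t * (inv t * y))) = t * (inv t * (inv s * (s * y)))" for y
    using c by simp
  show "inv t * inv s * (s * t) * (inv t * inv s) = inv t * inv s"
    by (simp add: mult.assoc c2 inv2' inv2)
qed


lemma idem_idems_ls: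
  fixes s t u a d e f :: 'a
  shows "inv s * s \<in> idems" using idem_ls by (simp add: idems_iff)
lemma idem_idems_rs:
  fixes s t u a d e f :: 'a
  shows "s * inv s \<in> idems" using idem_rs by (simp add: idems_iff)

lemma le_right:
  fixes s t u a d e f :: 'a
  shows "nat_le s t \<longleftrightarrow> s = t * (inv s * s)"
proof
  assume "nat_le s t"
  then obtain e where e: "e * e = e" and s: "s = t * e"
    by (auto simp: nat_le_def idems_def)
  have c: "e * (inv t * (t * y)) = inv t * (t * (e * y))" for y
    using comm_ax[OF e idem_ls[of t]] by (simp add: mult.assoc)
  show "s = t * (inv s * s)"
    using e by (simp add: s inv_mult inv_idem mult.assoc c inv1' inv1)
next
  assume "s = t * (inv s * s)"
  thus "nat_le s t" unfolding nat_le_def using idem_idems_ls by blast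
qed

lemma le_left:
  fixes s t u a d e f :: 'a
  shows "nat_le s t \<longleftrightarrow> (\<exists>e\<in>idems. s = e * t)"
proof
  assume "nat_le s t"
  then obtain e where e: "e * e = e" and s: "s = t * e"
    by (auto simp: nat_le_def idems_def)
  have c: "e * (inv t * (t * y)) = inv t * (t * (e * y))" for y
    using comm_ax[OF e idem_ls[of t]] by (simp add: mult.assoc)
  have ee: "e * (e * y) = e * y" for y using idem_ax[OF e] .
  have c0: "e * (inv t * t) = inv t * (t * e)"
    using idem_comm[OF e idem_ls[of t]] by (simp add: mult.assoc)
  have "(t*e*inv t) * (t*e*inv t) = t*e*inv t"
    by (simp add: mult.assoc c ee inv1' inv1)
  moreover have "s = (t*e*inv t) * t"
    by (simp add: s mult.assoc c c0 inv1' inv1)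
  ultimately show "\<exists>e\<in>idems. s = e * t" unfolding idems_def by blast
next
  assume "\<exists>e\<in>idems. s = e * t"
  then obtain e where e: "e * e = e" and s: "s = e * t"
    unfolding idems_def by auto
  have c: "t * (inv t * (e * y)) = e * (t * (inv t * y))" for y
    using comm_ax[OF idem_rs[of t] e] by (simp add: mult.assoc)
  have ee: "e * (e * y) = e * y" for y using idem_ax[OF e] .
  have "(inv t*e*t) * (inv t*e*t) = inv t*e*t"
    by (simp add: mult.assoc c ee inv2' inv1)
  moreover have "s = t * (inv t*e*t)"
    by (simp add: s mult.assoc c inv1' inv1)
  ultimately show "nat_le s t" unfolding nat_le_def idems_def by blast
qed

lemma le_refl:
  fixes s t u a d e f :: 'a
  shows "nat_le s s" unfolding le_right using inv1 by simp

lemma le_trans: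
  fixes s t u a d e f :: 'a
  shows "nat_le s t \<Longrightarrow> nat_le t u \<Longrightarrow> nat_le s u"
proof -
  assume "nat_le s t" "nat_le t u"
  then obtain e f where e: "e*e = e" "s = e * t" and f: "f * f = f" "t = f * u"
    unfolding le_left idems_def by blast
  have "(e*f)*(e*f) = e*f" by (rule idem_prod[OF e(1) f(1)])
  moreover have "s = (e*f)*u" using e f by (simp add: mult.assoc)
  ultimately show ?thesis unfolding le_left idems_def by blast
qed

lemma le_mult_right:
  fixes s t u a d e f :: 'a
  shows "nat_le s t \<Longrightarrow> nat_le (s * a) (t * a)"
  unfolding le_left by (auto simp: mult.assoc)

lemma le_mult_left:
  fixes s t u a d e f :: 'a
  shows "nat_le s t \<Longrightarrow> nat_le (a * s) (a * t)"
  unfolding nat_le_def by (auto simp: mult.assoc)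

lemma le_inv:
  fixes s t u a d e f :: 'a
  shows "nat_le s t \<Longrightarrow> nat_le (inv s) (inv t)"
proof -
  assume "nat_le s t"
  then obtain e where e: "e * e = e" and s: "s = t * e"
    by (auto simp: nat_le_def idems_def)
  have "inv s = e * inv t" using e by (simp add: s inv_mult inv_idem)
  thus ?thesis unfolding le_left idems_def using e by blast
qed

lemma le_inv_iff:
  fixes s t u a d e f :: 'a
  shows "nat_le (inv s) (inv t) \<longleftrightarrow> nat_le s t"
  using le_inv[of "inv s" "inv t"] le_inv[of s t] by (auto simp: inv_inv)

lemma le_rmul_idem:
  fixes s t u a d e f :: 'a
  shows "e \<in> idems \<Longrightarrow> nat_le (d * e) d"
  unfolding nat_le_def by blast

lemma le_down_idem:
  fixes s t u a d e f :: 'a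
  shows "nat_le s f \<Longrightarrow> f \<in> idems \<Longrightarrow> s \<in> idems"
proof -
  assume "nat_le s f" "f \<in> idems"
  then obtain e where e: "e * e = e" and s: "s = f * e" and f: "f * f = f"
    by (auto simp: nat_le_def idems_def)
  show ?thesis using idem_prod[OF f e] s by (simp add: idems_iff)
qed

lemma le_invt:
  fixes s t u a d e f :: 'a
  shows "nat_le s t \<Longrightarrow> inv t * s = inv s * s"
proof -
  assume "nat_le s t"
  then obtain e where e: "e * e = e" and s: "s = t * e"
    by (auto simp: nat_le_def idems_def)
  have c: "e * (inv t * (t * y)) = inv t * (t * (e * y))" for y
    using comm_ax[OF e idem_ls[of t]] by (simp add: mult.assoc)
  have ee: "e * (e * y) = e * y" for y using idem_ax[OF e] .
  show ?thesis using e by (simp add: s inv_mult inv_idem mult.assoc c ee)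
qed

lemma le_tinv:
  fixes s t u a d e f :: 'a
  shows "nat_le s t \<Longrightarrow> s * inv t = s * inv s"
proof -
  assume "nat_le s t"
  then obtain e where e: "e * e = e" and s: "s = e * t"
    by (auto simp: le_left idems_def)
  have c: "t * (inv t * (e * y)) = e * (t * (inv t * y))" for y
    using comm_ax[OF idem_rs[of t] e] by (simp add: mult.assoc)
  have c0: "t * (inv t * e) = e * (t * inv t)"
    using idem_comm[OF idem_rs[of t] e] by (simp add: mult.assoc)
  have ee: "e * (e * y) = e * y" for y using idem_ax[OF e] .
  show ?thesis using e by (simp add: s inv_mult inv_idem mult.assoc c c0 ee)
qed

lemma le_left':
  fixes s t u a d e f :: 'a
  shows "nat_le s t \<Longrightarrow> s = s * inv s * t"
proof -
  assume "nat_le s t"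
  then obtain e where e: "e * e = e" and s: "s = e * t"
    by (auto simp: le_left idems_def)
  have c: "t * (inv t * (e * y)) = e * (t * (inv t * y))" for y
    using comm_ax[OF idem_rs[of t] e] by (simp add: mult.assoc)
  have c0: "t * (inv t * e) = e * (t * inv t)"
    using idem_comm[OF idem_rs[of t] e] by (simp add: mult.assoc)
  have ee: "e * (e * y) = e * y" for y using idem_ax[OF e] .
  show ?thesis using e by (simp add: s inv_mult inv_idem mult.assoc c c0 ee inv1' inv1)
qed


abbreviation wb :: "'a \<Rightarrow> 'a \<Rightarrow> bool" where
  "wb \<equiv> way_below_in UNIV nat_le"

lemma directed_img:
  fixes D :: "'a set"
  assumes "directed_wrt nat_le D"
  shows "directed_wrt nat_le ((\<lambda>d. d * a) ` D)"
  using assms unfolding directed_wrt_def by (auto intro: le_mult_right)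

lemma wb_le:
  fixes x y :: 'a
  assumes "wb x y" shows "nat_le x y"
proof -
  have "directed_wrt nat_le {y}" unfolding directed_wrt_def using le_refl by auto
  moreover have "is_sup_in UNIV nat_le {y} y" unfolding is_sup_in_def using le_refl by auto
  ultimately show ?thesis using assms le_refl unfolding way_below_in_def by blast
qed

lemma wb_inv:
  fixes x y :: 'a
  assumes "wb x y" shows "wb (inv x) (inv y)"
  unfolding way_below_in_def
proof (intro allI impI)
  fix D :: "'a set" and z
  assume dir: "directed_wrt nat_le D" and sup: "is_sup_in UNIV nat_le D z" and yz: "nat_le (inv y) z"
  have dir': "directed_wrt nat_le (inv ` D)"
    using dir unfolding directed_wrt_def by (auto intro: le_inv)
  have sup': "is_sup_in UNIV nat_le (inv ` D) (inv z)"
    using sup unfolding is_sup_in_def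
    by (auto intro: le_inv) (metis le_inv_iff inv_inv)
  have "nat_le y (inv z)" using yz le_inv_iff inv_inv by metis
  then obtain d' where "d' \<in> inv ` D" "nat_le x d'"
    using assms dir' sup' unfolding way_below_in_def by blast
  then obtain d where "d \<in> D" "nat_le x (inv d)" by auto
  moreover have "nat_le (inv x) d" using le_inv[OF \<open>nat_le x (inv d)\<close>] by (simp add: inv_inv)
  ultimately show "\<exists>d\<in>D. nat_le (inv x) d" by blast
qed

lemma wbR:
  fixes x y a :: 'a
  assumes sep: "sep_scott_continuous TYPE('a)" and w: "wb x y" and c: "y * a * inv a = y"
  shows "wb (x * a) (y * a)"
  unfolding way_below_in_def
proof (intro allI impI)
  fix D :: "'a set" and z
  assume dir: "directed_wrt nat_le D" and sup: "is_sup_in UNIV nat_le D z" and yz: "nat_le (y * a) z"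
  have sup': "is_sup_in UNIV nat_le ((\<lambda>d. d * inv a) ` D) (z * inv a)"
    using sep dir sup unfolding sep_scott_continuous_def by blast
  have "nat_le y (z * inv a)" using le_mult_right[OF yz, of "inv a"] c by simp
  then obtain d where d: "d \<in> D" "nat_le x (d * inv a)"
    using w directed_img[OF dir] sup' unfolding way_below_in_def by blast
  have "nat_le (x * a) (d * inv a * a)" using le_mult_right[OF d(2)] .
  moreover have "nat_le (d * inv a * a) d"
    using le_rmul_idem[OF idem_idems_ls[of a], of d] by (simp add: mult.assoc)
  ultimately show "\<exists>d\<in>D. nat_le (x * a) d" using d(1) le_trans by blast
qed

lemma wbL:
  fixes x y a :: 'a
  assumes sep: "sep_scott_continuous TYPE('a)" and w: "wb x y" and c: "inv a * a * y = y"
  shows "wb (a * x) (a * y)"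
proof -
  have c': "inv y * inv a * inv (inv a) = inv y"
    using arg_cong[OF c, of inv] by (simp add: inv_mult inv_idem idem_ls inv_inv mult.assoc)
  have "wb (inv x * inv a) (inv y * inv a)" by (rule wbR[OF sep wb_inv[OF w] c'])
  hence "wb (inv (inv x * inv a)) (inv (inv y * inv a))" by (rule wb_inv)
  thus ?thesis by (simp add: inv_mult inv_inv)
qed


lemma wb_to_sig:
  fixes e f :: 'a
  assumes mir: "mirror_semigroup TYPE('a)" and w: "wb e f"
  shows "way_below_in idems nat_le e f"
  unfolding way_below_in_def
proof (intro allI impI)
  fix D :: "'a set" and z
  assume sub: "D \<subseteq> idems" and dir: "directed_wrt nat_le D" and sup: "is_sup_in idems nat_le D z"
    and fz: "nat_le f z"
  obtain y where y: "is_sup_in UNIV nat_le D y"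
    using mir sub dir sup unfolding mirror_semigroup_def by blast
  have "nat_le y z" using y sup unfolding is_sup_in_def by blast
  have "z \<in> idems" using sup unfolding is_sup_in_def by blast
  hence "y \<in> idems" using \<open>nat_le y z\<close> le_down_idem by blast
  hence "nat_le z y" using y sup unfolding is_sup_in_def by blast
  hence "nat_le f y" using fz le_trans by blast
  thus "\<exists>d\<in>D. nat_le e d" using w dir y unfolding way_below_in_def by blast
qed

lemma sig_to_wb:
  fixes e f :: 'a
  assumes sep: "sep_scott_continuous TYPE('a)" and f: "f \<in> idems"
    and w: "way_below_in idems nat_le e f"
  shows "wb e f"
  unfolding way_below_in_def
proof (intro allI impI)
  fix D :: "'a set" and z
  assume dir: "directed_wrt nat_le D" and sup: "is_sup_in UNIV nat_le D z"
    and fz: "nat_le f z"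
  have ff: "f * f = f" using f idems_iff by blast
  have sup': "is_sup_in UNIV nat_le ((\<lambda>d. d * f) ` D) (z * f)"
    using sep dir sup unfolding sep_scott_continuous_def by blast
  have "f = z * (inv f * f)" using le_right[THEN iffD1, OF fz] .
  hence zf: "z * f = f" using inv_idem[OF ff] ff by metis
  have sup2: "is_sup_in UNIV nat_le ((\<lambda>d. d * f) ` D) f" using sup' zf by simp
  have sub: "(\<lambda>d. d * f) ` D \<subseteq> idems"
  proof
    fix x assume "x \<in> (\<lambda>d. d * f) ` D"
    then obtain d where d: "d \<in> D" "x = d * f" by blast
    have "nat_le d z" using sup d unfolding is_sup_in_def by blast
    hence "nat_le x f" using le_mult_right[of d z f] zf d by simp
    thus "x \<in> idems" using le_down_idem f by blast
  qed
  have sup3: "is_sup_in idems nat_le ((\<lambda>d. d * f) ` D) f"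
    using sup2 f unfolding is_sup_in_def by blast
  have "\<exists>x\<in>(\<lambda>d. d * f) ` D. nat_le e x"
    using w sub directed_img[OF dir] sup3 le_refl[of f] unfolding way_below_in_def by blast
  then obtain x where x: "x \<in> (\<lambda>d. d * f) ` D" "nat_le e x" by blast
  then obtain d where d: "d \<in> D" "x = d * f" by blast
  have "nat_le x d" using le_rmul_idem[OF f] d by simp
  thus "\<exists>d\<in>D. nat_le e d" using x d le_trans by blast
qed

lemma main:
  assumes mir: "mirror_semigroup TYPE('a)"
    and sep: "sep_scott_continuous TYPE('a)"
  shows "multiplicative_on (UNIV::'a set) (way_below_in UNIV nat_le)
     \<longleftrightarrow> multiplicative_on (idems::'a set) (way_below_in idems nat_le)"
proof
  assume m: "multiplicative_on (UNIV::'a set) (way_below_in UNIV nat_le)"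
  show "multiplicative_on (idems::'a set) (way_below_in idems nat_le)"
    unfolding multiplicative_on_def
  proof (intro ballI impI)
    fix s t s' t' :: 'a
    assume i: "s \<in> idems" "t \<in> idems" "s' \<in> idems" "t' \<in> idems"
      and w1: "way_below_in idems nat_le s t" and w2: "way_below_in idems nat_le s' t'"
    have "wb s t" by (rule sig_to_wb[OF sep i(2) w1])
    moreover have "wb s' t'" by (rule sig_to_wb[OF sep i(4) w2])
    ultimately have "wb (s * s') (t * t')" using m unfolding multiplicative_on_def by blast
    thus "way_below_in idems nat_le (s * s') (t * t')" by (rule wb_to_sig[OF mir])
  qed
next
  assume m: "multiplicative_on (idems::'a set) (way_below_in idems nat_le)"
  show "multiplicative_on (UNIV::'a set) (way_below_in UNIV nat_le)"
    unfolding multiplicative_on_def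
  proof (intro ballI impI)
    fix s t s' t' :: 'a
    assume w1: "wb s t" and w2: "wb s' t'"
    have l1: "nat_le s t" by (rule wb_le[OF w1])
    have l2: "nat_le s' t'" by (rule wb_le[OF w2])
    have "wb (inv t * s) (inv t * t)"
      by (rule wbL[OF sep w1]) (simp add: inv_inv inv1 mult.assoc)
    hence a1: "wb (inv s * s) (inv t * t)" using le_invt[OF l1] by simp
    have "wb (s' * inv t') (t' * inv t')"
      by (rule wbR[OF sep w2]) (simp add: inv_inv inv1 mult.assoc)
    hence a2: "wb (s' * inv s') (t' * inv t')" using le_tinv[OF l2] by simp
    have b1: "way_below_in idems nat_le (inv s * s) (inv t * t)" by (rule wb_to_sig[OF mir a1])
    have b2: "way_below_in idems nat_le (s' * inv s') (t' * inv t')" by (rule wb_to_sig[OF mir a2])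
    have "way_below_in idems nat_le (inv s * s * (s' * inv s')) (inv t * t * (t' * inv t'))"
      using m b1 b2 idem_idems_ls idem_idems_rs unfolding multiplicative_on_def by blast
    moreover have "inv t * t * (t' * inv t') \<in> idems"
      using idem_prod[OF idem_ls idem_rs] idems_iff by blast
    ultimately have c: "wb (inv s * s * (s' * inv s')) (inv t * t * (t' * inv t'))"
      using sig_to_wb[OF sep] by blast
    have "wb (t * (inv s * s * (s' * inv s'))) (t * (inv t * t * (t' * inv t')))"
      by (rule wbL[OF sep c]) (simp add: mult.assoc inv2' inv1')
    hence "wb (t * (inv s * s * (s' * inv s')) * t') (t * (inv t * t * (t' * inv t')) * t')"
      by (rule wbR[OF sep]) (simp add: mult.assoc inv2' inv1' inv1 inv2)
    moreover have "t * (inv s * s * (s' * inv s')) * t' = s * s'"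
    proof -
      have e1: "s = t*(inv s*s)" using le_right[THEN iffD1, OF l1] .
      have e2: "s' = s'*inv s'*t'" using le_left'[OF l2] .
      have "t*(inv s*s) * (s'*inv s'*t') = s * s'" by (simp only: e1[symmetric] e2[symmetric])
      thus ?thesis by (simp add: mult.assoc)
    qed
    moreover have "t * (inv t * t * (t' * inv t')) * t' = t * t'"
      by (simp add: mult.assoc inv1' inv1)
    ultimately show "wb (s * s') (t * t')" by simp
  qed
qed

end

theorem proposition4p6:
  assumes "inverse_semigroup TYPE('a::semigroup_mult)"
    and "mirror_semigroup TYPE('a)"
    and "sep_scott_continuous TYPE('a)"
  shows "multiplicative_on (UNIV::'a set) (way_below_in UNIV nat_le)
     \<longleftrightarrow> multiplicative_on (idems::'a set) (way_below_in idems nat_le)"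
proof -
  interpret IS "TYPE('a)" by (rule IS.intro) (rule assms(1))
  show ?thesis by (rule main[OF assms(2,3)])
qed

end
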